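(* Let $\mathcal{G}$ be a Grothendieck category, $X\in\mathcal{G}$, $\sigma$ an ordinal, $(X_\alpha\mid\alpha\le\sigma)$ a chain of subobjects of $X$ with $X_0=0$, $X_\sigma=X$, $X_\mu=\bigcup_{\alpha<\mu}X_\alpha$ for limit $\mu\le\sigma$, and let $(A_\alpha\mid\alpha<\sigma)$ be subobjects of $X$ with $X_{\alpha+1}=X_\alpha+A_\alpha$ for all $\alpha<\sigma$. If $(S_i\mid i\in I)$ is a family of closed subsets of $\sigma$, then $\ell\big(\bigcap_{i\in I}S_i\big)=\bigcap_{i\in I}\ell(S_i)$.
   Context: For $S\subseteq\sigma$ (with $\sigma$ identified with the set of ordinals $<\sigma$), $\ell(S)=\sum_{\alpha\in S}A_\alpha\in\mathrm{Subobj}(X)$. A subset $S\subseteq\sigma$ is called closed if every $\alpha\in S$ satisfies $X_\alpha\cap A_\alpha\subseteq\sum_{\gamma\in S,\,\gamma<\alpha}A_\gamma$. Sums, intersections and direct unions are taken in the lattice $\mathrm{Subobj}(X)$ of subobjects of $X$. *)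

theory Defs
  imports Main
begin

text \<open>The lattice Subobj(X) of subobjects of an object X of a Grothendieck category
  is modelled abstractly by a complete lattice type 'a (bot = 0, top = X) which is
  modular and upper continuous (AB5: meets distribute over direct unions).\<close>

definition modular_lattice :: "'a::complete_lattice itself \<Rightarrow> bool" where
  "modular_lattice _ \<longleftrightarrow>
     (\<forall>a b c :: 'a. a \<le> c \<longrightarrow> sup a (inf b c) = inf (sup a b) c)"

definition directed_set :: "'a::order set \<Rightarrow> bool" where
  "directed_set D \<longleftrightarrow> (\<forall>x\<in>D. \<forall>y\<in>D. \<exists>z\<in>D. x \<le> z \<and> y \<le> z)"

definition upper_continuous :: "'a::complete_lattice itself \<Rightarrow> bool" where
  "upper_continuous _ \<longleftrightarrow>
     (\<forall>(a::'a) D. directed_set D \<longrightarrow> inf a (Sup D) = (SUP d\<in>D. inf a d))"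

text \<open>Ordinals \<le> sigma are modelled as the initial segment {..s} of a well-ordered type.\<close>

definition ozero :: "'o::wellorder" where
  "ozero = (LEAST b. True)"

definition osucc :: "'o::wellorder \<Rightarrow> 'o" where
  "osucc a = (LEAST b. a < b)"

definition is_limit :: "'o::wellorder \<Rightarrow> bool" where
  "is_limit m \<longleftrightarrow> (\<exists>b. b < m) \<and> (\<forall>b<m. osucc b < m)"

definition ell :: "('o \<Rightarrow> 'a::complete_lattice) \<Rightarrow> 'o set \<Rightarrow> 'a" where
  "ell A S = Sup (A ` S)"

definition closed_set :: "('o::wellorder \<Rightarrow> 'a::complete_lattice) \<Rightarrow> ('o \<Rightarrow> 'a) \<Rightarrow> 'o set \<Rightarrow> bool" where
  "closed_set X A S \<longleftrightarrow> (\<forall>a\<in>S. inf (X a) (A a) \<le> Sup (A ` {g\<in>S. g < a}))"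

end

theory Submission
  imports Defs
begin

lemma osucc_props:
  fixes c b :: "'o::wellorder"
  assumes "c < b"
  shows "c < osucc c" "osucc c \<le> b"
  unfolding osucc_def using assms by (auto intro: LeastI Least_le)

lemma lt_osucc:
  fixes c d :: "'o::wellorder"
  assumes "d < osucc c" "c < osucc c"
  shows "d \<le> c"
proof (rule ccontr)
  assume "\<not> d \<le> c"
  then have "c < d" by simp
  then have "osucc c \<le> d" by (rule osucc_props)
  with assms show False by simp
qed

lemma ozero_le: "ozero \<le> (x::'o::wellorder)"
  unfolding ozero_def by (rule Least_le) simp

lemma ord_cases:
  fixes b :: "'o::wellorder"
  obtains "b = ozero" | c where "c < b" "b = osucc c" | "is_limit b"
proof -
  consider "b = ozero" | "ozero < b" using ozero_le[of b] by force
  then show ?thesis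
  proof cases
    case 1 then show ?thesis using that by blast
  next
    case 2
    show ?thesis
    proof (cases "is_limit b")
      case True then show ?thesis using that by blast
    next
      case False
      with 2 obtain c where c: "c < b" "\<not> osucc c < b" unfolding is_limit_def by blast
      then have "osucc c = b" using osucc_props(2)[OF c(1)] by simp
      then show ?thesis using that c by blast
    qed
  qed
qed

lemma ell_mono: "T \<subseteq> U \<Longrightarrow> ell A T \<le> ell A U"
  unfolding ell_def by (rule Sup_subset_mono) blast

lemma ell_upper: "g \<in> T \<Longrightarrow> A g \<le> ell A T"
  unfolding ell_def by (rule Sup_upper) blast

lemma ell_le_X:
  fixes X A :: "'o::wellorder \<Rightarrow> 'a::complete_lattice"
  assumes chain: "mono_on {..s} X"
    and Xsucc: "\<And>a. a < s \<Longrightarrow> X (osucc a) = sup (X a) (A a)"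
    and "al \<le> s"
  shows "ell A (S \<inter> {..<al}) \<le> X al"
  unfolding ell_def
proof (rule Sup_least)
  fix x assume "x \<in> A ` (S \<inter> {..<al})"
  then obtain g where g: "g < al" "x = A g" by auto
  have gs: "g < s" using g assms by simp
  have "A g \<le> X (osucc g)" using Xsucc[OF gs] by simp
  also have "\<dots> \<le> X al"
    using osucc_props(2)[OF g(1)] assms by (intro mono_onD[OF chain]) auto
  finally show "x \<le> X al" using g by simp
qed

lemma L1:
  fixes X A :: "'o::wellorder \<Rightarrow> 'a::complete_lattice"
  assumes modular: "modular_lattice TYPE('a)"
    and ab5: "upper_continuous TYPE('a)"
    and chain: "mono_on {..s} X"
    and Xsucc: "\<And>a. a < s \<Longrightarrow> X (osucc a) = sup (X a) (A a)"
    and cl: "closed_set X A S"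
  shows "be \<le> s \<Longrightarrow> \<forall>al\<le>be. inf (X al) (ell A (S \<inter> {..<be})) \<le> ell A (S \<inter> {..<al})"
proof (induction be rule: less_induct)
  case (less be)
  have modl: "\<And>a b c::'a. a \<le> c \<Longrightarrow> sup a (inf b c) = inf (sup a b) c"
    using modular unfolding modular_lattice_def by blast
  have ab: "\<And>(a::'a) D. directed_set D \<Longrightarrow> inf a (Sup D) = (SUP d\<in>D. inf a d)"
    using ab5 unfolding upper_continuous_def by blast
  show ?case
  proof (intro allI impI)
    fix al assume al: "al \<le> be"
    show "inf (X al) (ell A (S \<inter> {..<be})) \<le> ell A (S \<inter> {..<al})"
    proof (cases "al = be")
      case True then show ?thesis by simp
    next
      case False
      with al have alb: "al < be" by simp
      show ?thesis
      proof (cases be rule: ord_cases)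
        case 1
        then show ?thesis using alb ozero_le[of al] by simp
      next
        case (2 c)
        have cs: "c < osucc c" using osucc_props(1)[OF 2(1)] .
        have alc: "al \<le> c" using lt_osucc[of al c] alb 2 cs by simp
        have IH: "inf (X al) (ell A (S \<inter> {..<c})) \<le> ell A (S \<inter> {..<al})"
          using less.IH[OF 2(1)] 2 less.prems alc by auto
        have seteq: "{..<be} = insert c {..<c}"
          using 2 cs lt_osucc[of _ c] by (auto simp: le_less)
        have Xal: "X al \<le> X c"
          using alc 2 less.prems by (intro mono_onD[OF chain]) auto
        show ?thesis
        proof (cases "c \<in> S")
          case False
          then have "S \<inter> {..<be} = S \<inter> {..<c}" using seteq False by auto
          then show ?thesis using IH by simp
        next
          case True
          let ?L = "ell A (S \<inter> {..<c})"
          have e: "ell A (S \<inter> {..<be}) = sup (A c) ?L"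
            unfolding ell_def using True seteq by (simp add: Int_insert_right)
          have LX: "?L \<le> X c" using ell_le_X[OF chain Xsucc, of c S] 2 less.prems by simp
          have clc: "inf (X c) (A c) \<le> ?L"
          proof -
            have "{g\<in>S. g < c} = S \<inter> {..<c}" by auto
            moreover have "inf (X c) (A c) \<le> Sup (A ` {g\<in>S. g < c})"
              using cl True unfolding closed_set_def by blast
            ultimately show ?thesis unfolding ell_def by simp
          qed
          have "inf (X c) (sup (A c) ?L) = inf (sup ?L (A c)) (X c)"
            by (simp add: inf_commute sup_commute)
          also have "\<dots> = sup ?L (inf (A c) (X c))" using modl[OF LX] by simp
          also have "\<dots> = ?L" using clc by (simp add: inf_commute sup_absorb1)
          finally have "inf (X c) (ell A (S \<inter> {..<be})) = ?L" using e by simp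
          then have "inf (X al) (ell A (S \<inter> {..<be})) = inf (X al) ?L"
          proof -
            have "inf (X al) (X c) = X al" using Xal by (rule inf_absorb1)
            then have "inf (X al) (ell A (S \<inter> {..<be})) = inf (X al) (inf (X c) (ell A (S \<inter> {..<be})))"
              by (metis inf_assoc)
            then show ?thesis using \<open>inf (X c) (ell A (S \<inter> {..<be})) = ?L\<close> by simp
          qed
          then show ?thesis using IH by simp
        qed
      next
        case 3
        let ?D = "(\<lambda>g. ell A (S \<inter> {..<g})) ` {..<be}"
        have dir: "directed_set ?D"
          unfolding directed_set_def
        proof (intro ballI)
          fix x y assume "x \<in> ?D" "y \<in> ?D"
          then obtain g h where gh: "g < be" "h < be" "x = ell A (S \<inter> {..<g})"
            "y = ell A (S \<inter> {..<h})" by auto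
          show "\<exists>z\<in>?D. x \<le> z \<and> y \<le> z"
            using gh by (intro bexI[of _ "ell A (S \<inter> {..<max g h})"])
              (auto intro!: ell_mono simp: less_max_iff_disj)
        qed
        have SD: "ell A (S \<inter> {..<be}) = Sup ?D"
        proof (rule antisym)
          show "ell A (S \<inter> {..<be}) \<le> Sup ?D"
            unfolding ell_def[of A "S \<inter> {..<be}"]
          proof (rule Sup_least)
            fix x assume "x \<in> A ` (S \<inter> {..<be})"
            then obtain g where g: "g \<in> S" "g < be" "x = A g" by auto
            have "osucc g < be" using 3 g unfolding is_limit_def by blast
            moreover have "g < osucc g" using osucc_props(1)[OF g(2)] .
            ultimately have "x \<le> ell A (S \<inter> {..<osucc g})" "ell A (S \<inter> {..<osucc g}) \<in> ?D"
              using g by (auto intro: ell_upper)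
            then show "x \<le> Sup ?D" by (meson Sup_upper order_trans)
          qed
          show "Sup ?D \<le> ell A (S \<inter> {..<be})"
            by (rule Sup_least) (auto intro!: ell_mono)
        qed
        have "inf (X al) (ell A (S \<inter> {..<be})) = (SUP d\<in>?D. inf (X al) d)"
          using ab[OF dir] SD by simp
        also have "\<dots> \<le> ell A (S \<inter> {..<al})"
        proof (rule SUP_least)
          fix d assume "d \<in> ?D"
          then obtain g where g: "g < be" "d = ell A (S \<inter> {..<g})" by auto
          show "inf (X al) d \<le> ell A (S \<inter> {..<al})"
          proof (cases "al \<le> g")
            case True
            then show ?thesis using less.IH[OF g(1)] g less.prems by auto
          next
            case False
            then have "d \<le> ell A (S \<inter> {..<al})" using g by (auto intro!: ell_mono)
            then show ?thesis by (meson inf.coboundedI2)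
          qed
        qed
        finally show ?thesis .
      qed
    qed
  qed
qed

theorem lemma2p4:
  fixes X A :: "'o::wellorder \<Rightarrow> 'a::complete_lattice"
    and s :: 'o
    and S :: "'i \<Rightarrow> 'o set"
    and I :: "'i set"
  assumes modular: "modular_lattice TYPE('a)"
    and ab5: "upper_continuous TYPE('a)"
    and chain: "mono_on {..s} X"
    and X0: "X ozero = bot"
    and Xs: "X s = top"
    and Xlim: "\<And>m. m \<le> s \<Longrightarrow> is_limit m \<Longrightarrow> X m = (SUP a\<in>{..<m}. X a)"
    and Xsucc: "\<And>a. a < s \<Longrightarrow> X (osucc a) = sup (X a) (A a)"
    and Ssub: "\<And>i. i \<in> I \<Longrightarrow> S i \<subseteq> {..<s}"
    and Sclosed: "\<And>i. i \<in> I \<Longrightarrow> closed_set X A (S i)"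
  shows "ell A ({..<s} \<inter> (\<Inter>i\<in>I. S i)) = (INF i\<in>I. ell A (S i))"
proof -
  have modl: "\<And>a b c::'a. a \<le> c \<Longrightarrow> sup a (inf b c) = inf (sup a b) c"
    using modular unfolding modular_lattice_def by blast
  have ab: "\<And>(a::'a) D. directed_set D \<Longrightarrow> inf a (Sup D) = (SUP d\<in>D. inf a d)"
    using ab5 unfolding upper_continuous_def by blast
  define T where "T = (\<Inter>i\<in>I. S i)"
  define Y where "Y = (INF i\<in>I. ell A (S i))"
  have M: "be \<le> s \<Longrightarrow> inf (X be) Y \<le> ell A (T \<inter> {..<be})" for be
  proof (induction be rule: less_induct)
    case (less be)
    show ?case
    proof (cases be rule: ord_cases)
      case 1 then show ?thesis using X0 by simp
    next
      case (2 c)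
      have cs: "c < osucc c" using osucc_props(1)[OF 2(1)] .
      have seteq: "{..<be} = insert c {..<c}"
        using 2 cs lt_osucc[of _ c] by (auto simp: le_less)
      have cls: "c < s" using 2 less.prems by simp
      have Xb: "X be = sup (X c) (A c)" using Xsucc[OF cls] 2 by simp
      have Xc: "X c \<le> X be" using Xb by simp
      have IH: "inf (X c) Y \<le> ell A (T \<inter> {..<c})"
        using less.IH[OF 2(1)] less.prems 2 by simp
      have Tm: "ell A (T \<inter> {..<c}) \<le> ell A (T \<inter> {..<be})"
        using seteq by (intro ell_mono) auto
      show ?thesis
      proof (cases "\<forall>i\<in>I. c \<in> S i")
        case True
        let ?Y' = "inf (X be) Y"
        have AY: "A c \<le> Y" unfolding Y_def using True by (auto intro!: INF_greatest ell_upper)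
        have AY': "A c \<le> ?Y'" using AY Xb by simp
        have "sup (A c) (inf (X c) ?Y') = inf (sup (A c) (X c)) ?Y'" using modl[OF AY'] .
        also have "\<dots> = ?Y'" using Xb by (simp add: sup_commute inf_absorb2)
        finally have e: "?Y' = sup (A c) (inf (X c) Y)"
          using Xc by (metis inf.absorb_iff1 inf.assoc)
        have cT: "c \<in> T \<inter> {..<be}" using True 2 unfolding T_def by auto
        show ?thesis unfolding e
          using IH Tm ell_upper[OF cT, of A] by (meson le_sup_iff order_trans)
      next
        case False
        then obtain j where j: "j \<in> I" "c \<notin> S j" by blast
        have Yj: "Y \<le> ell A (S j)" unfolding Y_def using j by (auto intro: INF_lower)
        have sj: "S j \<inter> {..<s} = S j" using Ssub[OF j(1)] by auto
        have "inf (X be) (ell A (S j \<inter> {..<s})) \<le> ell A (S j \<inter> {..<be})"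
          using L1[OF modular ab5 chain Xsucc Sclosed[OF j(1)], of s] less.prems by auto
        also have "S j \<inter> {..<be} = S j \<inter> {..<c}" using seteq j by auto
        also have "ell A (S j \<inter> {..<c}) \<le> X c"
          using ell_le_X[OF chain Xsucc, of c] cls by simp
        finally have "inf (X be) (ell A (S j)) \<le> X c" using sj by simp
        then have "inf (X be) Y \<le> X c" using Yj by (meson inf_mono order_refl order_trans)
        then have "inf (X be) Y \<le> inf (X c) Y" by simp
        then show ?thesis using IH Tm by (meson order_trans)
      qed
    next
      case 3
      let ?D = "X ` {..<be}"
      have dir: "directed_set ?D"
        unfolding directed_set_def
      proof (intro ballI)
        fix x y assume "x \<in> ?D" "y \<in> ?D"
        then obtain g h where gh: "g < be" "h < be" "x = X g" "y = X h" by auto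
        show "\<exists>z\<in>?D. x \<le> z \<and> y \<le> z"
          using gh less.prems by (intro bexI[of _ "X (max g h)"])
            (auto intro!: mono_onD[OF chain])
      qed
      have "inf (X be) Y = inf Y (Sup ?D)" using Xlim[OF less.prems 3] by (simp add: inf_commute)
      also have "\<dots> = (SUP d\<in>?D. inf Y d)" using ab[OF dir] .
      also have "\<dots> \<le> ell A (T \<inter> {..<be})"
      proof (rule SUP_least)
        fix d assume "d \<in> ?D"
        then obtain g where g: "g < be" "d = X g" by auto
        have "inf Y d \<le> ell A (T \<inter> {..<g})"
          using less.IH[OF g(1)] g less.prems by (simp add: inf_commute)
        also have "\<dots> \<le> ell A (T \<inter> {..<be})" using g by (intro ell_mono) auto
        finally show "inf Y d \<le> ell A (T \<inter> {..<be})" .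
      qed
      finally show ?thesis .
    qed
  qed
  have "Y \<le> ell A (T \<inter> {..<s})" using M[of s] Xs by simp
  moreover have "ell A (T \<inter> {..<s}) \<le> Y"
    unfolding Y_def T_def by (rule INF_greatest) (auto intro!: ell_mono)
  ultimately show ?thesis unfolding Y_def T_def by (simp add: Int_commute)
qed

end
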